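(* Let $\mathcal{X}$ be a finite set and let $\mu,\nu$ be probability distributions on $\mathcal{X}$ with $\mathrm{D}_\infty(\mu\|\nu)<\infty$. Let $\widetilde D\sim\mu^n$ and $\widehat D\sim\nu^m$ be datasets of $n$ and $m$ independent samples from $\mu$ and $\nu$ respectively, and let $\widehat{\mathcal{X}}=\{x\in\mathcal{X}: x\text{ appears in }\widehat D\}$ be the support of $\widehat D$. Let $Q$ be a finite set of statistical queries $q:\mathcal{X}\to[0,1]$ and let $\alpha,\beta>0$. If \[n\ge \frac{8}{\alpha^2}\log\left(\frac{4|Q|}{\beta}\right)\quad\text{and}\quad m\ge\left(\frac{32}{\alpha^2}e^{\mathrm{D}_2(\mu\|\nu)}+\frac{8}{3\alpha}e^{\mathrm{D}_\infty(\mu\|\nu)}\right)\log\left(\frac{4|Q|+4}{\beta}\right),\] then $\Pr\left[f_{\widetilde D,Q}(\widehat{\mathcal{X}})\le\alpha\right]\ge 1-\beta$.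
   Context: For a dataset $D=(x_1,\dots,x_k)\in\mathcal{X}^k$ and a query $q:\mathcal{X}\to[0,1]$, $q(D)=\frac1k\sum_{i}q(x_i)$. For a nonempty $S\subseteq\mathcal{X}$, the best mixture error is $f_{D,Q}(S)=\min_{\mu'\in\Delta(S)}\max_{q\in Q}\left|q(D)-\sum_{x\in S}\mu'_x q(x)\right|$, where $\Delta(S)$ is the set of probability distributions on $S$. Rényi divergences: $\mathrm{D}_2(\mu\|\nu)=\log\sum_{x\in\mathcal{X}}\mu(x)^2/\nu(x)$ and $\mathrm{D}_\infty(\mu\|\nu)=\log\max_{x:\mu(x)>0}\mu(x)/\nu(x)$ (in general $\mathrm{D}_\alpha(\mu\|\nu)=\frac{1}{\alpha-1}\log\sum_x\mu(x)^\alpha\nu(x)^{1-\alpha}$). *)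

theory Defs
  imports "HOL-Probability.Probability"
begin

definition query_val :: "('a \<Rightarrow> real) \<Rightarrow> 'a list \<Rightarrow> real" where
  "query_val q D = (\<Sum>x\<leftarrow>D. q x) / real (length D)"

text \<open>The max over an empty Q is taken to be 0 (all values are nonnegative).\<close>
definition mix_err :: "'a list \<Rightarrow> ('a \<Rightarrow> real) set \<Rightarrow> 'a set \<Rightarrow> real" where
  "mix_err D Q S = Inf {Max (insert 0 ((\<lambda>q. \<bar>query_val q D - (\<Sum>x\<in>S. pmf w x * q x)\<bar>) ` Q))
                         | w. set_pmf w \<subseteq> S}"

definition renyi2 :: "'a::finite pmf \<Rightarrow> 'a pmf \<Rightarrow> real" where
  "renyi2 \<mu> \<nu> = ln (\<Sum>x\<in>UNIV. pmf \<mu> x ^ 2 / pmf \<nu> x)"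

definition renyi_inf :: "'a::finite pmf \<Rightarrow> 'a pmf \<Rightarrow> ereal" where
  "renyi_inf \<mu> \<nu> = (if \<forall>x. pmf \<mu> x > 0 \<longrightarrow> pmf \<nu> x > 0
      then ereal (ln (Max {pmf \<mu> x / pmf \<nu> x | x. pmf \<mu> x > 0})) else \<infinity>)"

end

theory Submission
  imports Defs
begin

lemma exp_bern_pos:
  fixes y :: real assumes y0: "0 \<le> y" and y3: "y < 3"
  shows "exp y \<le> 1 + y + y\<^sup>2 / (2 * (1 - y/3))"
proof -
  have sumsx: "(\<lambda>n. y\<^sup>2 / 2 * (y/3) ^ n) sums (y\<^sup>2 / 2 * (1 / (1 - y/3)))"
    by (intro sums_mult geometric_sums) (use y0 y3 in auto)
  have "suminf (\<lambda>n. inverse(fact (n+2)) * (y ^ (n + 2))) \<le> suminf (\<lambda>n. (y\<^sup>2/2) * ((y/3)^n))"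
  proof (intro suminf_le allI)
    show "inverse (fact (n + 2)) * y ^ (n + 2) \<le> (y\<^sup>2/2) * ((y/3)^n)" for n :: nat
    proof -
      have "(2::nat) * 3 ^ n \<le> fact (n + 2)"
        by (induct n) (simp_all add: algebra_simps)
      then have "real ((2::nat) * 3 ^ n) \<le> real_of_nat (fact (n + 2))"
        by (simp only: of_nat_le_iff)
      then have f: "((2::real) * 3 ^ n) \<le> fact (n + 2)"
        unfolding of_nat_fact by simp
      have "inverse (fact (n + 2)) * y ^ (n + 2) = y^n * y^2 / fact (n+2)"
        by (simp add: power_add divide_inverse mult_ac power2_eq_square)
      also have "\<dots> \<le> y^n * y^2 / (2 * 3^n)"
        by (intro divide_left_mono f) (use y0 in auto)
      also have "\<dots> = (y\<^sup>2/2) * ((y/3)^n)"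
        by (simp add: power_divide)
      finally show ?thesis .
    qed
    show "summable (\<lambda>n. inverse (fact (n + 2)) * y ^ (n + 2))"
      by (rule summable_exp [THEN summable_ignore_initial_segment])
    show "summable (\<lambda>n. y\<^sup>2 / 2 * (y/3) ^ n)"
      by (rule sums_summable [OF sumsx])
  qed
  also have "\<dots> = y\<^sup>2 / 2 * (1 / (1 - y/3))"
    by (rule sums_unique [THEN sym]) (rule sumsx)
  finally show ?thesis
    unfolding exp_first_two_terms by (simp add: field_simps)
qed

lemma exp_bern_neg:
  fixes y :: real assumes "y \<le> 0"
  shows "exp y \<le> 1 + y + y\<^sup>2 / 2"
proof -
  obtain t where "exp y = (\<Sum>m<3. (y ^ m) / fact m) + (exp t / fact 3) * y ^ 3"
    using Maclaurin_exp_le[of y 3] by blast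
  moreover have "(exp t / fact 3) * y ^ 3 \<le> 0"
    using assms by (intro mult_nonneg_nonpos) (auto simp: power_odd_eq)
  ultimately show ?thesis by (simp add: eval_nat_numeral fact_numeral power2_eq_square)
qed

lemma exp_bern:
  fixes y c :: real assumes "y \<le> c" "0 \<le> c" "c < 3"
  shows "exp y \<le> 1 + y + y\<^sup>2 / (2 * (1 - c/3))"
proof (cases "y \<le> 0")
  case True
  have "y\<^sup>2 / 2 \<le> y\<^sup>2 / (2 * (1 - c/3))"
    using assms by (intro divide_left_mono) auto
  with exp_bern_neg[OF True] show ?thesis by linarith
next
  case False
  have "y\<^sup>2 / (2 * (1 - y/3)) \<le> y\<^sup>2 / (2 * (1 - c/3))"
    using assms False by (intro divide_left_mono) auto
  with exp_bern_pos[of y] False assms show ?thesis by linarith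
qed

lemma finite_set_replicate_pmf: "finite (set_pmf (replicate_pmf n (p :: 'a::finite pmf)))"
proof -
  have "set_pmf (replicate_pmf n p) \<subseteq> {xs. set xs \<subseteq> UNIV \<and> length xs = n}"
    by (auto simp: set_replicate_pmf)
  moreover have "finite {xs. set xs \<subseteq> (UNIV::'a set) \<and> length xs = n}"
    by (rule finite_lists_length_eq) simp
  ultimately show ?thesis by (rule finite_subset)
qed

lemma expectation_finite_pmf:
  fixes p :: "'a::finite pmf" and g :: "'a \<Rightarrow> real"
  shows "measure_pmf.expectation p g = (\<Sum>a\<in>UNIV. g a * pmf p a)"
  by (rule integral_measure_pmf_real) auto

lemma expectation_replicate_prod:
  fixes p :: "'a::finite pmf" and g :: "'a \<Rightarrow> real"
  shows "measure_pmf.expectation (replicate_pmf n p) (\<lambda>D. prod_list (map g D))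
           = (measure_pmf.expectation p g) ^ n"
proof (induction n)
  case 0
  then show ?case by simp
next
  case (Suc n)
  have eq: "replicate_pmf n p \<bind> (\<lambda>xs. return_pmf (a#xs)) = map_pmf ((#) a) (replicate_pmf n p)" for a
    by (simp add: map_pmf_def)
  have "measure_pmf.expectation (replicate_pmf (Suc n) p) (\<lambda>D. prod_list (map g D))
     = (\<Sum>a\<in>UNIV. pmf p a *\<^sub>R measure_pmf.expectation (map_pmf ((#) a) (replicate_pmf n p)) (\<lambda>D. prod_list (map g D)))"
    unfolding replicate_pmf.simps eq
    by (rule pmf_expectation_bind) (auto intro: finite_set_replicate_pmf)
  also have "\<dots> = (\<Sum>a\<in>UNIV. pmf p a * (g a * (measure_pmf.expectation p g) ^ n))"
    by (simp add: Suc.IH)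
  also have "\<dots> = measure_pmf.expectation p g * (measure_pmf.expectation p g) ^ n"
    by (simp add: expectation_finite_pmf sum_distrib_right mult_ac)
  finally show ?case by simp
qed

lemma chernoff_replicate:
  fixes p :: "'a::finite pmf" and f :: "'a \<Rightarrow> real"
  assumes l: "l \<ge> 0"
  shows "measure_pmf.prob (replicate_pmf n p) {D. real (length D) * c \<le> sum_list (map f D)}
          \<le> exp (- l * real n * c) * (measure_pmf.expectation p (\<lambda>x. exp (l * f x))) ^ n"
proof -
  let ?A = "{D. real (length D) * c \<le> sum_list (map f D)}"
  let ?M = "measure_pmf (replicate_pmf n p)"
  have int: "integrable ?M h" for h :: "'a list \<Rightarrow> real"
    by (rule integrable_measure_pmf_finite[OF finite_set_replicate_pmf])
  have "measure_pmf.prob (replicate_pmf n p) ?A = integral\<^sup>L ?M (indicator ?A)"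
    by simp
  also have "\<dots> \<le> integral\<^sup>L ?M (\<lambda>D. exp (- l * real n * c) * prod_list (map (\<lambda>x. exp (l * f x)) D))"
  proof (rule integral_mono_AE[OF int int], rule AE_pmfI)
    fix D assume D: "D \<in> set_pmf (replicate_pmf n p)"
    then have len: "length D = n" by (simp add: set_replicate_pmf)
    have pl: "prod_list (map (\<lambda>x. exp (l * f x)) D) = exp (l * sum_list (map f D))"
      by (induction D) (simp_all add: exp_add distrib_left)
    show "indicator ?A D \<le> exp (- l * real n * c) * prod_list (map (\<lambda>x. exp (l * f x)) D)"
    proof (cases "D \<in> ?A")
      case True
      then have "l * (real n * c) \<le> l * sum_list (map f D)"
        using len l by (intro mult_left_mono) auto
      then have "1 \<le> exp (- l * real n * c) * exp (l * sum_list (map f D))"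
        by (simp add: mult_exp_exp)
      then show ?thesis using True pl by simp
    next
      case False
      then show ?thesis by (simp add: pl)
    qed
  qed
  also have "\<dots> = exp (- l * real n * c) * (measure_pmf.expectation p (\<lambda>x. exp (l * f x))) ^ n"
    using expectation_replicate_prod[of n p "\<lambda>x. exp (l * f x)"] by simp
  finally show ?thesis .
qed

lemma sum_list_map_shift:
  "sum_list (map (\<lambda>x. f x - c) D) = sum_list (map f D) - real (length D) * (c::real)"
  by (induction D) (simp_all add: algebra_simps)

lemma hoeffding_mgf:
  fixes p :: "'a::finite pmf" and f :: "'a \<Rightarrow> real"
  assumes ab: "\<forall>x. a \<le> f x \<and> f x \<le> a + 1" and l: "l > 0"
  shows "measure_pmf.expectation p (\<lambda>x. exp (l * (f x - measure_pmf.expectation p f)))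
           \<le> exp (l\<^sup>2 / 8)"
proof -
  interpret interval_bounded_random_variable "measure_pmf p" f a "a + 1"
    by unfold_locales (use ab in auto)
  have "ennreal (measure_pmf.expectation p (\<lambda>x. exp (l * (f x - measure_pmf.expectation p f))))
      = nn_integral (measure_pmf p) (\<lambda>x. exp (l * (f x - measure_pmf.expectation p f)))"
    by (rule nn_integral_eq_integral[symmetric])
       (auto intro: integrable_measure_pmf_finite)
  also have "\<dots> \<le> ennreal (exp (l\<^sup>2 * (a + 1 - a)\<^sup>2 / 8))"
    by (rule Hoeffdings_lemma_nn_integral[OF l])
  finally show ?thesis by (simp add: ennreal_le_iff)
qed

lemma hoeffding_replicate:
  fixes p :: "'a::finite pmf" and f :: "'a \<Rightarrow> real"
  assumes ab: "\<forall>x. a \<le> f x \<and> f x \<le> a + 1" and t: "t \<ge> 0"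
  shows "measure_pmf.prob (replicate_pmf n p)
           {D. real (length D) * (measure_pmf.expectation p f + t) \<le> sum_list (map f D)}
          \<le> exp (- 2 * real n * t\<^sup>2)"
proof (cases "t = 0")
  case True
  then show ?thesis by simp
next
  case False
  with t have t0: "t > 0" by simp
  define E where "E = measure_pmf.expectation p f"
  have "{D. real (length D) * (E + t) \<le> sum_list (map f D)}
      = {D. real (length D) * t \<le> sum_list (map (\<lambda>x. f x - E) D)}"
    by (auto simp: sum_list_map_shift algebra_simps)
  then have "measure_pmf.prob (replicate_pmf n p) {D. real (length D) * (E + t) \<le> sum_list (map f D)}
     = measure_pmf.prob (replicate_pmf n p) {D. real (length D) * t \<le> sum_list (map (\<lambda>x. f x - E) D)}"
    by simp
  also have "\<dots> \<le> exp (- (4*t) * real n * t) *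
        (measure_pmf.expectation p (\<lambda>x. exp ((4*t) * (f x - E)))) ^ n"
    by (rule chernoff_replicate) (use t in auto)
  also have "\<dots> \<le> exp (- (4*t) * real n * t) * (exp ((4*t)\<^sup>2/8)) ^ n"
    unfolding E_def
    by (intro mult_left_mono power_mono hoeffding_mgf[OF ab]) (use t0 in auto)
  also have "\<dots> = exp (- 2 * real n * t\<^sup>2)"
    by (simp add: exp_of_nat_mult[symmetric] mult_exp_exp power2_eq_square algebra_simps)
  finally show ?thesis by (simp add: E_def)
qed

lemma bernstein_mgf:
  fixes p :: "'a::finite pmf" and f :: "'a \<Rightarrow> real"
  assumes fB: "\<forall>x. f x \<le> B" and l: "l \<ge> 0" and c: "l * B < 3" "0 \<le> l * B"
    and s: "measure_pmf.expectation p (\<lambda>x. (f x)\<^sup>2) \<le> s"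
  shows "measure_pmf.expectation p (\<lambda>x. exp (l * f x))
          \<le> exp (l * measure_pmf.expectation p f + l\<^sup>2 * s / (2 * (1 - l * B / 3)))"
proof -
  define K where "K = 1 / (2 * (1 - l * B / 3))"
  obtain z where z: "z = l * B" by blast
  have pos: "1 - l * B / 3 > 0" unfolding z[symmetric] using c(1) unfolding z[symmetric] by linarith
  have K0: "K \<ge> 0" unfolding K_def z[symmetric] using c(1) unfolding z[symmetric] by simp
  have pw: "exp (l * f x) \<le> 1 + l * f x + (l * f x)\<^sup>2 * K" for x
  proof -
    have "l * f x \<le> l * B" using fB l by (intro mult_left_mono) auto
    from exp_bern[OF this c(2) c(1)]
    have "exp (l * f x) \<le> 1 + l * f x + (l * f x)\<^sup>2 / (2 * (1 - l * B / 3))" .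
    moreover have "(l * f x)\<^sup>2 / (2 * (1 - l * B / 3)) = (l * f x)\<^sup>2 * K"
      unfolding K_def by (simp only: times_divide_eq_right mult_1_right)
    ultimately show ?thesis by linarith
  qed
  have "measure_pmf.expectation p (\<lambda>x. exp (l * f x)) = (\<Sum>a\<in>UNIV. exp (l * f a) * pmf p a)"
    by (rule expectation_finite_pmf)
  also have "\<dots> \<le> (\<Sum>a\<in>UNIV. (1 + l * f a + (l * f a)\<^sup>2 * K) * pmf p a)"
    by (intro sum_mono mult_right_mono pw) auto
  also have "\<dots> = (\<Sum>a\<in>UNIV. pmf p a) + l * (\<Sum>a\<in>UNIV. f a * pmf p a)
                   + l\<^sup>2 * K * (\<Sum>a\<in>UNIV. (f a)\<^sup>2 * pmf p a)"
    by (simp add: sum.distrib sum_distrib_left algebra_simps power_mult_distrib)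
  also have "(\<Sum>a\<in>UNIV. pmf p a) = 1" by (rule sum_pmf_eq_1) auto
  also have "(\<Sum>a\<in>UNIV. f a * pmf p a) = measure_pmf.expectation p f"
    by (rule expectation_finite_pmf[symmetric])
  also have "(\<Sum>a\<in>UNIV. (f a)\<^sup>2 * pmf p a) = measure_pmf.expectation p (\<lambda>x. (f x)\<^sup>2)"
    by (rule expectation_finite_pmf[symmetric])
  also have "1 + l * measure_pmf.expectation p f + l\<^sup>2 * K * measure_pmf.expectation p (\<lambda>x. (f x)\<^sup>2)
      \<le> 1 + l * measure_pmf.expectation p f + l\<^sup>2 * K * s"
    using s K0 by (intro add_left_mono mult_left_mono) auto
  also have "\<dots> \<le> exp (l * measure_pmf.expectation p f + l\<^sup>2 * K * s)"
    using exp_ge_add_one_self[of "l * measure_pmf.expectation p f + l\<^sup>2 * K * s"] by linarith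
  finally show ?thesis by (simp add: K_def)
qed

lemma bernstein_replicate:
  fixes p :: "'a::finite pmf" and f :: "'a \<Rightarrow> real"
  assumes fB: "\<forall>x. f x \<le> B" and B: "B > 0" and s0: "s > 0" and t: "t > 0"
    and s: "measure_pmf.expectation p (\<lambda>x. (f x)\<^sup>2) \<le> s"
  shows "measure_pmf.prob (replicate_pmf n p)
           {D. real (length D) * (measure_pmf.expectation p f + t) \<le> sum_list (map f D)}
          \<le> exp (- real n * t\<^sup>2 / (2 * (s + B * t / 3)))"
proof -
  define E where "E = measure_pmf.expectation p f"
  define l where "l = t / (s + B * t / 3)"
  have den: "s + B * t / 3 > 0" using s0 B t by (simp add: add_pos_pos)
  have l0: "l > 0" unfolding l_def using den t by simp
  have lB: "l * B = B * t / (s + B * t / 3)" by (simp add: l_def)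
  have lB3: "l * B < 3"
    unfolding lB using den s0 by (simp add: divide_less_eq)
  have lB0: "0 \<le> l * B" using l0 B by simp
  have "measure_pmf.prob (replicate_pmf n p) {D. real (length D) * (E + t) \<le> sum_list (map f D)}
     \<le> exp (- l * real n * (E + t)) * (measure_pmf.expectation p (\<lambda>x. exp (l * f x))) ^ n"
    by (rule chernoff_replicate) (use l0 in auto)
  also have "\<dots> \<le> exp (- l * real n * (E + t)) * (exp (l * E + l\<^sup>2 * s / (2 * (1 - l * B / 3)))) ^ n"
    unfolding E_def
    by (intro mult_left_mono power_mono bernstein_mgf[OF fB _ lB3 lB0 s]) (use l0 in auto)
  also have "\<dots> = exp (real n * (- l * t + l\<^sup>2 * s / (2 * (1 - l * B / 3))))"
    by (simp add: exp_of_nat_mult[symmetric] mult_exp_exp algebra_simps)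
  also have "- l * t + l\<^sup>2 * s / (2 * (1 - l * B / 3)) = - t\<^sup>2 / (2 * (s + B * t / 3))"
  proof -
    define d where "d = s + B * t / 3"
    have d0: "d > 0" using den by (simp add: d_def)
    have ld: "l = t / d" by (simp add: l_def d_def)
    have eq: "1 - l * B / 3 = s / d"
      unfolding lB using den by (simp add: field_simps d_def)
    have "l\<^sup>2 * s / (2 * (s / d)) = t\<^sup>2 / (2 * d)"
      using d0 s0 by (simp add: ld field_simps power2_eq_square)
    then have "l\<^sup>2 * s / (2 * (1 - l * B / 3)) = t\<^sup>2 / (2 * d)"
      by (simp only: eq)
    then have "- l * t + l\<^sup>2 * s / (2 * (1 - l * B / 3)) = - t\<^sup>2 / (2 * d)"
      using d0 by (simp add: ld field_simps power2_eq_square)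
    then show ?thesis by (simp add: d_def)
  qed
  finally show ?thesis by (simp add: E_def)
qed

lemma sum_list_map_mult_right:
  "sum_list (map (\<lambda>y. f y * c) D) = sum_list (map f D) * (c::real)"
  by (induction D) (simp_all add: algebra_simps)

lemma sum_list_map_neg:
  "sum_list (map (\<lambda>y. - f y) D) = - sum_list (map f D :: real list)"
  by (induction D) simp_all

lemma sum_swap_list:
  fixes F :: "'b \<Rightarrow> 'a::finite \<Rightarrow> real"
  shows "(\<Sum>x\<in>UNIV. sum_list (map (\<lambda>y. F y x) D)) = sum_list (map (\<lambda>y. \<Sum>x\<in>UNIV. F y x) D)"
  by (induction D) (simp_all add: sum.distrib)

lemma sum_list_bounds01:
  assumes "\<forall>x. 0 \<le> q x \<and> q x \<le> (1::real)"
  shows "0 \<le> sum_list (map q D) \<and> sum_list (map q D) \<le> real (length D)"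
  using assms by (induction D) (auto intro: add_nonneg_nonneg add_mono)

lemma query_val_01:
  assumes "\<forall>x. 0 \<le> q x \<and> q x \<le> (1::real)"
  shows "0 \<le> query_val q D \<and> query_val q D \<le> 1"
  using sum_list_bounds01[OF assms, of D]
  by (cases "D = []") (auto simp: query_val_def divide_le_eq)

lemma mix_err_le:
  assumes w: "set_pmf w \<subseteq> S" and Q: "finite Q" and a: "a \<ge> 0"
    and b: "\<forall>q\<in>Q. \<bar>query_val q D - (\<Sum>x\<in>S. pmf w x * q x)\<bar> \<le> a"
  shows "mix_err D Q S \<le> a"
proof -
  let ?F = "\<lambda>w. Max (insert 0 ((\<lambda>q. \<bar>query_val q D - (\<Sum>x\<in>S. pmf w x * q x)\<bar>) ` Q))"
  have mem: "?F w \<in> {?F w | w. set_pmf w \<subseteq> S}" using w by blast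
  have bdd: "bdd_below {?F w | w. set_pmf w \<subseteq> S}"
  proof (rule bdd_belowI)
    fix x assume "x \<in> {?F w | w. set_pmf w \<subseteq> S}"
    then obtain w' where "x = ?F w'" by blast
    then show "0 \<le> x" using Q by (simp add: Max_ge_iff)
  qed
  have le: "?F w \<le> a" using Q a b by (simp add: Max_le_iff)
  show ?thesis unfolding mix_err_def by (rule cInf_lower2[OF mem le bdd])
qed

lemma det_step:
  fixes Dt Dh :: "'a::finite list" and R :: "'a \<Rightarrow> real" and E :: "('a \<Rightarrow> real) \<Rightarrow> real"
  assumes Q: "finite Q" and qr: "\<forall>q\<in>Q. \<forall>x. 0 \<le> q x \<and> q x \<le> 1" and \<alpha>: "\<alpha> > 0"
    and R0: "\<forall>x. R x \<ge> 0" and Dh: "Dh \<noteq> []"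
    and g1: "\<forall>q\<in>Q. \<bar>query_val q Dt - E q\<bar> \<le> \<alpha>/2"
    and g2: "\<forall>q\<in>Q. \<bar>sum_list (map (\<lambda>x. R x * q x) Dh) / real (length Dh) - E q\<bar> \<le> \<alpha>/4"
    and g3: "\<bar>sum_list (map R Dh) / real (length Dh) - 1\<bar> \<le> \<alpha>/4"
  shows "mix_err Dt Q (set Dh) \<le> \<alpha>"
proof (cases "\<alpha> \<ge> 1")
  case True
  define y where "y = hd Dh"
  have y: "y \<in> set Dh" using Dh by (simp add: y_def)
  show ?thesis
  proof (rule mix_err_le[of "return_pmf y"])
    show "set_pmf (return_pmf y) \<subseteq> set Dh" using y by simp
    show "\<forall>q\<in>Q. \<bar>query_val q Dt - (\<Sum>x\<in>set Dh. pmf (return_pmf y) x * q x)\<bar> \<le> \<alpha>"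
    proof
      fix q assume q: "q \<in> Q"
      have "(\<Sum>x\<in>set Dh. pmf (return_pmf y) x * q x) = (\<Sum>x\<in>set Dh. if x = y then q y else 0)"
        by (intro sum.cong refl) (simp add: pmf_return)
      also have "\<dots> = q y" using y by (simp add: sum.delta')
      finally have eq: "(\<Sum>x\<in>set Dh. pmf (return_pmf y) x * q x) = q y" .
      have "0 \<le> q y" "q y \<le> 1" using qr q by auto
      moreover have "0 \<le> query_val q Dt \<and> query_val q Dt \<le> 1"
        using qr q by (intro query_val_01) auto
      ultimately show "\<bar>query_val q Dt - (\<Sum>x\<in>set Dh. pmf (return_pmf y) x * q x)\<bar> \<le> \<alpha>"
        unfolding eq using True by linarith
    qed
  qed (use Q \<alpha> in auto)
next
  case False
  define k where "k = real (length Dh)"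
  have k0: "k > 0" using Dh by (simp add: k_def)
  define W where "W = sum_list (map R Dh)"
  define B where "B = W / k"
  have B0: "B > 0" using g3 False unfolding B_def W_def k_def by linarith
  have W0: "W > 0" using B0 k0 by (simp add: B_def zero_less_divide_iff)
  define h where "h x = sum_list (map (\<lambda>y. if y = x then R y else 0) Dh)" for x
  have h0: "h x \<ge> 0" for x
    unfolding h_def using R0 by (intro sum_list_nonneg) auto
  have hout: "x \<notin> set Dh \<Longrightarrow> h x = 0" for x
    unfolding h_def by (induction Dh) auto
  have sumh: "(\<Sum>x\<in>UNIV. h x) = W"
    unfolding h_def W_def by (subst sum_swap_list) (simp add: sum.delta)
  define w where "w = embed_pmf (\<lambda>x. h x / W)"
  have nn: "(\<integral>\<^sup>+x. ennreal (h x / W) \<partial>count_space UNIV) = 1"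
  proof -
    have "(\<integral>\<^sup>+x. ennreal (h x / W) \<partial>count_space UNIV) = (\<Sum>x\<in>UNIV. ennreal (h x / W))"
      by (simp add: nn_integral_count_space_finite)
    also have "\<dots> = ennreal (\<Sum>x\<in>UNIV. h x / W)"
      using h0 W0 by (intro sum_ennreal) auto
    also have "(\<Sum>x\<in>UNIV. h x / W) = 1"
      using sumh W0 by (simp add: sum_divide_distrib[symmetric])
    finally show ?thesis by simp
  qed
  have pw: "pmf w x = h x / W" for x
    unfolding w_def by (rule pmf_embed_pmf) (use h0 W0 nn in auto)
  have setw: "set_pmf w \<subseteq> set Dh"
  proof
    fix x assume "x \<in> set_pmf w"
    then have "h x \<noteq> 0" by (simp add: set_pmf_iff pw)
    then show "x \<in> set Dh" using hout by blast
  qed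
  show ?thesis
  proof (rule mix_err_le[OF setw Q])
    show "0 \<le> \<alpha>" using \<alpha> by simp
    show "\<forall>q\<in>Q. \<bar>query_val q Dt - (\<Sum>x\<in>set Dh. pmf w x * q x)\<bar> \<le> \<alpha>"
    proof
      fix q assume q: "q \<in> Q"
      define A where "A = sum_list (map (\<lambda>x. R x * q x) Dh) / k"
      have "(\<Sum>x\<in>set Dh. pmf w x * q x) = (\<Sum>x\<in>UNIV. pmf w x * q x)"
        by (rule sum.mono_neutral_left) (auto simp: pw hout)
      also have "\<dots> = (\<Sum>x\<in>UNIV. h x * q x) / W"
        by (simp add: pw sum_divide_distrib)
      also have "(\<Sum>x\<in>UNIV. h x * q x) = sum_list (map (\<lambda>y. R y * q y) Dh)"
      proof -
        have "(\<Sum>x\<in>UNIV. h x * q x)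
            = (\<Sum>x\<in>UNIV. sum_list (map (\<lambda>y. (if y = x then R y else 0) * q x) Dh))"
          unfolding h_def by (simp add: sum_list_map_mult_right)
        also have "\<dots> = sum_list (map (\<lambda>y. \<Sum>x\<in>UNIV. (if y = x then R y else 0) * q x) Dh)"
          by (rule sum_swap_list)
        also have "\<dots> = sum_list (map (\<lambda>y. R y * q y) Dh)"
        proof -
          have "(\<Sum>x\<in>UNIV. (if y = x then R y else 0) * q x) = R y * q y" for y
          proof -
            have "(\<Sum>x\<in>UNIV. (if y = x then R y else 0) * q x) = (\<Sum>x\<in>UNIV. if y = x then R y * q x else 0)"
              by (intro sum.cong refl) simp
            also have "\<dots> = R y * q y" by (simp add: sum.delta)
            finally show ?thesis .
          qed
          then show ?thesis by simp
        qed
        finally show ?thesis .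
      qed
      also have "sum_list (map (\<lambda>y. R y * q y) Dh) / W = A / B"
        using k0 W0 by (simp add: A_def B_def)
      finally have eq: "(\<Sum>x\<in>set Dh. pmf w x * q x) = A / B" .
      have A0: "A \<ge> 0" unfolding A_def using R0 qr q k0
        by (intro divide_nonneg_pos sum_list_nonneg) auto
      have AB: "A \<le> B" unfolding A_def B_def W_def using k0
      proof (intro divide_right_mono sum_list_mono)
        fix x show "R x * q x \<le> R x" using R0 qr q by (simp add: mult_left_le)
      qed simp
      have "A - A / B = (A / B) * (B - 1)"
        using B0 by (simp add: field_simps)
      then have "\<bar>A - A / B\<bar> = (A / B) * \<bar>B - 1\<bar>"
        using B0 A0 by (simp add: abs_mult)
      also have "\<dots> \<le> 1 * \<bar>B - 1\<bar>"
        using AB B0 by (intro mult_right_mono) (auto simp: divide_le_eq)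
      finally have c1: "\<bar>A - A / B\<bar> \<le> \<alpha>/4" using g3 by (simp add: B_def W_def k_def)
      have c2: "\<bar>A - E q\<bar> \<le> \<alpha>/4" using g2 q by (simp add: A_def k_def)
      have c3: "\<bar>query_val q Dt - E q\<bar> \<le> \<alpha>/2" using g1 q by simp
      show "\<bar>query_val q Dt - (\<Sum>x\<in>set Dh. pmf w x * q x)\<bar> \<le> \<alpha>"
        unfolding eq using c1 c2 c3 by linarith
    qed
  qed
qed

lemma abs_dev_prob:
  fixes p :: "'a::finite pmf" and f :: "'a \<Rightarrow> real"
  assumes t: "t \<ge> 0"
  shows "measure_pmf.prob (replicate_pmf n p) {D. t < \<bar>sum_list (map f D) / real (length D) - c\<bar>}
    \<le> measure_pmf.prob (replicate_pmf n p) {D. real (length D) * (c + t) \<le> sum_list (map f D)}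
     + measure_pmf.prob (replicate_pmf n p) {D. real (length D) * (- c + t) \<le> sum_list (map (\<lambda>x. - f x) D)}"
proof -
  have sub: "{D. t < \<bar>sum_list (map f D) / real (length D) - c\<bar>}
    \<subseteq> {D. real (length D) * (c + t) \<le> sum_list (map f D)}
       \<union> {D. real (length D) * (- c + t) \<le> sum_list (map (\<lambda>x. - f x) D)}"
  proof
    fix D assume D: "D \<in> {D. t < \<bar>sum_list (map f D) / real (length D) - c\<bar>}"
    show "D \<in> {D. real (length D) * (c + t) \<le> sum_list (map f D)}
       \<union> {D. real (length D) * (- c + t) \<le> sum_list (map (\<lambda>x. - f x) D)}"
    proof (cases "D = []")
      case True then show ?thesis by simp
    next
      case False
      define k where "k = real (length D)"
      have k: "k > 0" using False by (simp add: k_def)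
      define S where "S = sum_list (map f D)"
      have "t < \<bar>S / k - c\<bar>" using D by (simp add: S_def k_def)
      then have "t < S / k - c \<or> t < c - S / k" by linarith
      then have "k * (c + t) \<le> S \<or> k * (- c + t) \<le> - S"
      proof
        assume "t < S / k - c"
        then have "c + t < S / k" by simp
        then have "k * (c + t) < S" using k by (simp add: less_divide_eq mult.commute)
        then show ?thesis by simp
      next
        assume "t < c - S / k"
        then have "S / k < c - t" by simp
        then have "S < k * (c - t)" using k by (simp add: divide_less_eq mult.commute)
        then show ?thesis by (simp add: algebra_simps)
      qed
      then show ?thesis by (simp add: S_def k_def sum_list_map_neg)
    qed
  qed
  have "measure_pmf.prob (replicate_pmf n p) {D. t < \<bar>sum_list (map f D) / real (length D) - c\<bar>}
    \<le> measure_pmf.prob (replicate_pmf n p) ({D. real (length D) * (c + t) \<le> sum_list (map f D)}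
       \<union> {D. real (length D) * (- c + t) \<le> sum_list (map (\<lambda>x. - f x) D)})"
    by (rule measure_pmf.finite_measure_mono[OF sub]) simp
  also have "\<dots> \<le> measure_pmf.prob (replicate_pmf n p) {D. real (length D) * (c + t) \<le> sum_list (map f D)}
     + measure_pmf.prob (replicate_pmf n p) {D. real (length D) * (- c + t) \<le> sum_list (map (\<lambda>x. - f x) D)}"
    by (rule measure_Un_le) simp_all
  finally show ?thesis .
qed

lemma hoeff_abs:
  fixes p :: "'a::finite pmf" and q :: "'a \<Rightarrow> real"
  assumes q: "\<forall>x. 0 \<le> q x \<and> q x \<le> 1" and t: "t \<ge> 0"
  shows "measure_pmf.prob (replicate_pmf n p) {D. t < \<bar>query_val q D - measure_pmf.expectation p q\<bar>}
           \<le> 2 * exp (- 2 * real n * t\<^sup>2)"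
proof -
  have e: "measure_pmf.expectation p (\<lambda>x. - q x) = - measure_pmf.expectation p q"
    by simp
  have "measure_pmf.prob (replicate_pmf n p) {D. t < \<bar>query_val q D - measure_pmf.expectation p q\<bar>}
    \<le> measure_pmf.prob (replicate_pmf n p) {D. real (length D) * (measure_pmf.expectation p q + t) \<le> sum_list (map q D)}
     + measure_pmf.prob (replicate_pmf n p) {D. real (length D) * (measure_pmf.expectation p (\<lambda>x. - q x) + t) \<le> sum_list (map (\<lambda>x. - q x) D)}"
    unfolding query_val_def e by (rule abs_dev_prob[OF t])
  also have "\<dots> \<le> exp (- 2 * real n * t\<^sup>2) + exp (- 2 * real n * t\<^sup>2)"
    by (intro add_mono hoeffding_replicate[OF _ t, where a = 0]
        hoeffding_replicate[OF _ t, where a = "-1"]) (use q in auto)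
  finally show ?thesis by simp
qed

lemma bern_abs:
  fixes p :: "'a::finite pmf" and f :: "'a \<Rightarrow> real"
  assumes fB: "\<forall>x. f x \<le> B" and fB': "\<forall>x. - f x \<le> B" and B: "B > 0" and s0: "s > 0" and t: "t > 0"
    and s: "measure_pmf.expectation p (\<lambda>x. (f x)\<^sup>2) \<le> s"
  shows "measure_pmf.prob (replicate_pmf n p)
           {D. t < \<bar>sum_list (map f D) / real (length D) - measure_pmf.expectation p f\<bar>}
          \<le> 2 * exp (- real n * t\<^sup>2 / (2 * (s + B * t / 3)))"
proof -
  have e: "measure_pmf.expectation p (\<lambda>x. - f x) = - measure_pmf.expectation p f"
    by simp
  have s': "measure_pmf.expectation p (\<lambda>x. (- f x)\<^sup>2) \<le> s" using s by simp
  have "measure_pmf.prob (replicate_pmf n p) {D. t < \<bar>sum_list (map f D) / real (length D) - measure_pmf.expectation p f\<bar>}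
    \<le> measure_pmf.prob (replicate_pmf n p) {D. real (length D) * (measure_pmf.expectation p f + t) \<le> sum_list (map f D)}
     + measure_pmf.prob (replicate_pmf n p) {D. real (length D) * (measure_pmf.expectation p (\<lambda>x. - f x) + t) \<le> sum_list (map (\<lambda>x. - f x) D)}"
    unfolding e by (rule abs_dev_prob) (use t in simp)
  also have "\<dots> \<le> exp (- real n * t\<^sup>2 / (2 * (s + B * t / 3))) + exp (- real n * t\<^sup>2 / (2 * (s + B * t / 3)))"
    by (intro add_mono bernstein_replicate[OF fB B s0 t s] bernstein_replicate[OF fB' B s0 t s'])
  finally show ?thesis by simp
qed

theorem mainTheorem2:
  fixes \<mu> \<nu> :: "'a::finite pmf" and n m :: nat and Q :: "('a \<Rightarrow> real) set"
    and \<alpha> \<beta> :: real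
  assumes "renyi_inf \<mu> \<nu> < \<infinity>"
    and "finite Q" and "\<forall>q\<in>Q. \<forall>x. 0 \<le> q x \<and> q x \<le> 1"
    and "\<alpha> > 0" and "\<beta> > 0"
    and "real n \<ge> 8 / \<alpha>^2 * ln (4 * real (card Q) / \<beta>)"
    and "real m \<ge> (32 / \<alpha>^2 * exp (renyi2 \<mu> \<nu>)
                    + 8 / (3 * \<alpha>) * exp (real_of_ereal (renyi_inf \<mu> \<nu>)))
                   * ln ((4 * real (card Q) + 4) / \<beta>)"
  shows "measure_pmf.prob (pair_pmf (replicate_pmf n \<mu>) (replicate_pmf m \<nu>))
           {(Dt, Dh). mix_err Dt Q (set Dh) \<le> \<alpha>} \<ge> 1 - \<beta>"
proof (cases "\<beta> \<ge> 1")
  case True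
  have "0 \<le> measure_pmf.prob (pair_pmf (replicate_pmf n \<mu>) (replicate_pmf m \<nu>))
           {(Dt, Dh). mix_err Dt Q (set Dh) \<le> \<alpha>}" by (rule measure_nonneg)
  then show ?thesis using True by linarith
next
  case False
  then have \<beta>1: "\<beta> < 1" by simp
  note Qf = assms(2) and qr = assms(3) and \<alpha>0 = assms(4) and \<beta>0 = assms(5)
  have supp: "pmf \<nu> x > 0" if "pmf \<mu> x > 0" for x
  proof (rule ccontr)
    assume "\<not> pmf \<nu> x > 0"
    then have "renyi_inf \<mu> \<nu> = \<infinity>" using that unfolding renyi_inf_def by auto
    with assms(1) show False by simp
  qed
  define Mx where "Mx = Max {pmf \<mu> x / pmf \<nu> x | x. pmf \<mu> x > 0}"
  have ri: "renyi_inf \<mu> \<nu> = ereal (ln Mx)"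
    unfolding renyi_inf_def Mx_def using supp by auto
  obtain x0 where x0: "x0 \<in> set_pmf \<mu>" using set_pmf_not_empty by fast
  have mu0: "pmf \<mu> x0 > 0" using x0 by (simp add: pmf_positive)
  have nu0: "pmf \<nu> x0 > 0" using supp[OF mu0] .
  define R where "R x = pmf \<mu> x / pmf \<nu> x" for x
  have finM: "finite {pmf \<mu> x / pmf \<nu> x | x. pmf \<mu> x > 0}" by simp
  have RM: "R x \<le> Mx" if "pmf \<mu> x > 0" for x
    unfolding Mx_def R_def by (rule Max_ge[OF finM]) (use that in blast)
  have "R x0 > 0" using mu0 nu0 by (simp add: R_def)
  then have Mx0: "Mx > 0" using RM[OF mu0] by linarith
  have R0: "\<forall>x. R x \<ge> 0" by (simp add: R_def)
  have RM': "\<forall>x. R x \<le> Mx"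
  proof
    fix x show "R x \<le> Mx"
    proof (cases "pmf \<mu> x > 0")
      case True then show ?thesis by (rule RM)
    next
      case False then have "pmf \<mu> x = 0" using pmf_nonneg[of \<mu> x] by linarith
      then show ?thesis using Mx0 by (simp add: R_def)
    qed
  qed
  have eM: "exp (real_of_ereal (renyi_inf \<mu> \<nu>)) = Mx" using ri Mx0 by simp
  define S2 where "S2 = (\<Sum>x\<in>UNIV. pmf \<mu> x ^ 2 / pmf \<nu> x)"
  have S20: "S2 > 0"
  proof -
    have "pmf \<mu> x0 ^ 2 / pmf \<nu> x0 \<le> S2"
      unfolding S2_def by (rule member_le_sum) auto
    moreover have "pmf \<mu> x0 ^ 2 / pmf \<nu> x0 > 0" using mu0 nu0 by simp
    ultimately show ?thesis by linarith
  qed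
  have eS: "exp (renyi2 \<mu> \<nu>) = S2" using S20 by (simp add: renyi2_def S2_def)
  have ER: "measure_pmf.expectation \<nu> (\<lambda>x. R x * g x) = measure_pmf.expectation \<mu> g" for g
  proof -
    have "measure_pmf.expectation \<nu> (\<lambda>x. R x * g x) = (\<Sum>a\<in>UNIV. R a * g a * pmf \<nu> a)"
      by (rule expectation_finite_pmf)
    also have "\<dots> = (\<Sum>a\<in>UNIV. g a * pmf \<mu> a)"
    proof (intro sum.cong refl)
      fix a show "R a * g a * pmf \<nu> a = g a * pmf \<mu> a"
      proof (cases "pmf \<nu> a > 0")
        case True then show ?thesis by (simp add: R_def)
      next
        case False
        then have "pmf \<nu> a = 0" using pmf_nonneg[of \<nu> a] by linarith
        moreover have "pmf \<mu> a = 0"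
        proof (rule ccontr)
          assume "pmf \<mu> a \<noteq> 0"
          then have "pmf \<mu> a > 0" using pmf_nonneg[of \<mu> a] by linarith
          then show False using supp False by blast
        qed
        ultimately show ?thesis by simp
      qed
    qed
    also have "\<dots> = measure_pmf.expectation \<mu> g"
      by (rule expectation_finite_pmf[symmetric])
    finally show ?thesis .
  qed
  have ES: "measure_pmf.expectation \<nu> (\<lambda>x. (R x * g x)\<^sup>2) \<le> S2" if g: "\<forall>x. 0 \<le> g x \<and> g x \<le> 1" for g
  proof -
    have "measure_pmf.expectation \<nu> (\<lambda>x. (R x * g x)\<^sup>2) = (\<Sum>a\<in>UNIV. (R a * g a)\<^sup>2 * pmf \<nu> a)"
      by (rule expectation_finite_pmf)
    also have "\<dots> \<le> S2" unfolding S2_def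
    proof (intro sum_mono)
      fix a show "(R a * g a)\<^sup>2 * pmf \<nu> a \<le> pmf \<mu> a ^ 2 / pmf \<nu> a"
      proof (cases "pmf \<nu> a > 0")
        case True
        have "(R a * g a)\<^sup>2 \<le> (R a)\<^sup>2"
          using g R0 by (intro power_mono) (auto simp: mult_left_le)
        then have "(R a * g a)\<^sup>2 * pmf \<nu> a \<le> (R a)\<^sup>2 * pmf \<nu> a"
          using True by (intro mult_right_mono) auto
        also have "\<dots> = pmf \<mu> a ^ 2 / pmf \<nu> a"
          using True by (simp add: R_def power2_eq_square)
        finally show ?thesis .
      next
        case False
        then have "pmf \<nu> a = 0" using pmf_nonneg[of \<nu> a] by linarith
        then show ?thesis by simp
      qed
    qed
    finally show ?thesis .
  qed
  define L1 where "L1 = ln (4 * real (card Q) / \<beta>)"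
  define L2 where "L2 = ln ((4 * real (card Q) + 4) / \<beta>)"
  define Cm where "Cm = 32 / \<alpha>^2 * S2 + 8 / (3 * \<alpha>) * Mx"
  have Cm0: "Cm > 0" unfolding Cm_def using S20 Mx0 \<alpha>0 by (intro add_pos_pos) auto
  have mC: "real m \<ge> Cm * L2" using assms(7) unfolding eM eS Cm_def L2_def .
  have "1 < (4 * real (card Q) + 4) / \<beta>" using \<beta>0 \<beta>1 by (simp add: less_divide_eq)
  then have L20: "L2 > 0" unfolding L2_def by (rule ln_gt_zero)
  have "Cm * L2 > 0" using Cm0 L20 by (rule mult_pos_pos)
  then have "real m > 0" using mC by linarith
  then have m0: "m > 0" by simp
  have nL: "real n * \<alpha>\<^sup>2 \<ge> 8 * L1"
  proof -
    have "8 / \<alpha>^2 * L1 * \<alpha>^2 = 8 * L1" using \<alpha>0 by simp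
    moreover have "8 / \<alpha>^2 * L1 * \<alpha>^2 \<le> real n * \<alpha>^2"
      using assms(6) unfolding L1_def[symmetric] by (rule mult_right_mono) simp
    ultimately show ?thesis by simp
  qed
  define t where "t = \<alpha> / 4"
  have t0: "t > 0" using \<alpha>0 by (simp add: t_def)
  have bern_tail: "2 * exp (- real m * t\<^sup>2 / (2 * (S2 + Mx * t / 3))) \<le> 2 * (\<beta> / (4 * real (card Q) + 4))"
  proof -
    have Ceq: "Cm = (2 * (S2 + Mx * t / 3)) / t\<^sup>2"
      unfolding Cm_def t_def using \<alpha>0 by (simp add: field_simps power2_eq_square)
    have eq: "real m * t\<^sup>2 / (2 * (S2 + Mx * t / 3)) = real m / Cm"
      unfolding Ceq by simp
    have "L2 \<le> real m / Cm" using mC Cm0 by (simp add: le_divide_eq mult.commute)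
    then have "exp (- (real m / Cm)) \<le> exp (- L2)" by simp
    also have "exp (- L2) = \<beta> / (4 * real (card Q) + 4)"
      unfolding L2_def using \<beta>0 by (simp add: exp_minus)
    finally have fin: "exp (- (real m / Cm)) \<le> \<beta> / (4 * real (card Q) + 4)" .
    have e2: "- real m * t\<^sup>2 / (2 * (S2 + Mx * t / 3)) = - (real m / Cm)"
      using eq by simp
    show ?thesis unfolding e2 using fin by simp
  qed
  have hoeff_tail: "real (card Q) * (2 * exp (- 2 * real n * (\<alpha>/2)\<^sup>2)) \<le> \<beta> / 2"
  proof (cases "card Q = 0")
    case True then show ?thesis using \<beta>0 by simp
  next
    case False
    then have cQ: "real (card Q) > 0" by simp
    have "L1 \<le> 2 * real n * (\<alpha>/2)\<^sup>2"
    proof (cases "L1 \<ge> 0")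
      case True then show ?thesis using nL by (simp add: power_divide)
    next
      case False
      have "0 \<le> 2 * real n * (\<alpha>/2)\<^sup>2" by simp
      then show ?thesis using False by linarith
    qed
    then have "exp (- 2 * real n * (\<alpha>/2)\<^sup>2) \<le> exp (- L1)" by simp
    also have "exp (- L1) = \<beta> / (4 * real (card Q))"
      unfolding L1_def using \<beta>0 cQ by (simp add: exp_minus)
    finally have "real (card Q) * (2 * exp (- 2 * real n * (\<alpha>/2)\<^sup>2)) \<le> real (card Q) * (2 * (\<beta> / (4 * real (card Q))))"
      using cQ by (intro mult_left_mono) auto
    also have "\<dots> = \<beta> / 2" using cQ by (simp add: field_simps)
    finally show ?thesis .
  qed
  define G1 where "G1 = {Dt. \<forall>q\<in>Q. \<bar>query_val q Dt - measure_pmf.expectation \<mu> q\<bar> \<le> \<alpha>/2}"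
  define Q' where "Q' = insert (\<lambda>_. 1) Q"
  define G2 where "G2 = {Dh. length Dh = m \<and> (\<forall>g\<in>Q'. \<bar>sum_list (map (\<lambda>x. R x * g x) Dh) / real (length Dh)
                       - measure_pmf.expectation \<nu> (\<lambda>x. R x * g x)\<bar> \<le> t)}"
  have sub: "G1 \<times> G2 \<subseteq> {(Dt, Dh). mix_err Dt Q (set Dh) \<le> \<alpha>}"
  proof safe
    fix Dt Dh assume "Dt \<in> G1" "Dh \<in> G2"
    then have g1: "\<forall>q\<in>Q. \<bar>query_val q Dt - measure_pmf.expectation \<mu> q\<bar> \<le> \<alpha>/2"
      and len: "length Dh = m"
      and g2': "\<forall>g\<in>Q'. \<bar>sum_list (map (\<lambda>x. R x * g x) Dh) / real (length Dh)
                       - measure_pmf.expectation \<mu> g\<bar> \<le> \<alpha>/4"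
      by (auto simp: G1_def G2_def ER t_def)
    show "mix_err Dt Q (set Dh) \<le> \<alpha>"
    proof (rule det_step[OF Qf qr \<alpha>0 R0 _ g1])
      show "Dh \<noteq> []" using len m0 by auto
      show "\<forall>q\<in>Q. \<bar>sum_list (map (\<lambda>x. R x * q x) Dh) / real (length Dh) - measure_pmf.expectation \<mu> q\<bar> \<le> \<alpha> / 4"
        using g2' by (simp add: Q'_def)
      have "\<bar>sum_list (map (\<lambda>x. R x * 1) Dh) / real (length Dh) - measure_pmf.expectation \<mu> (\<lambda>_. 1)\<bar> \<le> \<alpha> / 4"
        using g2' by (simp add: Q'_def)
      then show "\<bar>sum_list (map R Dh) / real (length Dh) - 1\<bar> \<le> \<alpha> / 4" by simp
    qed
  qed
  have P1: "measure_pmf.prob (replicate_pmf n \<mu>) G1 \<ge> 1 - \<beta>/2"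
  proof -
    have "UNIV - G1 \<subseteq> (\<Union>q\<in>Q. {D. \<alpha>/2 < \<bar>query_val q D - measure_pmf.expectation \<mu> q\<bar>})"
      by (auto simp: G1_def not_le)
    then have "measure_pmf.prob (replicate_pmf n \<mu>) (UNIV - G1)
        \<le> measure_pmf.prob (replicate_pmf n \<mu>) (\<Union>q\<in>Q. {D. \<alpha>/2 < \<bar>query_val q D - measure_pmf.expectation \<mu> q\<bar>})"
      by (rule measure_pmf.finite_measure_mono) simp
    also have "\<dots> \<le> (\<Sum>q\<in>Q. measure_pmf.prob (replicate_pmf n \<mu>) {D. \<alpha>/2 < \<bar>query_val q D - measure_pmf.expectation \<mu> q\<bar>})"
      by (rule measure_pmf.finite_measure_subadditive_finite[OF Qf]) simp
    also have "\<dots> \<le> (\<Sum>q\<in>Q. 2 * exp (- 2 * real n * (\<alpha>/2)\<^sup>2))"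
      by (intro sum_mono hoeff_abs) (use qr \<alpha>0 in auto)
    also have "\<dots> = real (card Q) * (2 * exp (- 2 * real n * (\<alpha>/2)\<^sup>2))" by simp
    also have "\<dots> \<le> \<beta>/2" by (rule hoeff_tail)
    finally have "measure_pmf.prob (replicate_pmf n \<mu>) (UNIV - G1) \<le> \<beta>/2" .
    moreover have "measure_pmf.prob (replicate_pmf n \<mu>) (UNIV - G1) = 1 - measure_pmf.prob (replicate_pmf n \<mu>) G1"
      using measure_pmf.prob_compl[of G1 "replicate_pmf n \<mu>"] by simp
    ultimately show ?thesis by linarith
  qed
  have P2: "measure_pmf.prob (replicate_pmf m \<nu>) G2 \<ge> 1 - \<beta>/2"
  proof -
    let ?B = "\<lambda>g. {D. t < \<bar>sum_list (map (\<lambda>x. R x * g x) D) / real (length D)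
                       - measure_pmf.expectation \<nu> (\<lambda>x. R x * g x)\<bar>}"
    have Q'f: "finite Q'" using Qf by (simp add: Q'_def)
    have Q'r: "\<forall>g\<in>Q'. \<forall>x. 0 \<le> g x \<and> g x \<le> 1" using qr by (simp add: Q'_def)
    have cQ': "real (card Q') \<le> real (card Q) + 1"
      unfolding Q'_def using card_insert_le_m1[of "card Q + 1" Q] Qf
      by (simp add: card_insert_if)
    have "UNIV - G2 \<subseteq> {D. length D \<noteq> m} \<union> (\<Union>g\<in>Q'. ?B g)"
      by (auto simp: G2_def not_le)
    then have "measure_pmf.prob (replicate_pmf m \<nu>) (UNIV - G2)
        \<le> measure_pmf.prob (replicate_pmf m \<nu>) ({D. length D \<noteq> m} \<union> (\<Union>g\<in>Q'. ?B g))"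
      by (rule measure_pmf.finite_measure_mono) simp
    also have "\<dots> \<le> measure_pmf.prob (replicate_pmf m \<nu>) {D. length D \<noteq> m}
                   + measure_pmf.prob (replicate_pmf m \<nu>) (\<Union>g\<in>Q'. ?B g)"
      by (rule measure_Un_le) simp_all
    also have "measure_pmf.prob (replicate_pmf m \<nu>) {D. length D \<noteq> m} = 0"
      by (subst measure_pmf_zero_iff) (auto simp: set_replicate_pmf)
    also have "measure_pmf.prob (replicate_pmf m \<nu>) (\<Union>g\<in>Q'. ?B g)
        \<le> (\<Sum>g\<in>Q'. measure_pmf.prob (replicate_pmf m \<nu>) (?B g))"
      by (rule measure_pmf.finite_measure_subadditive_finite[OF Q'f]) simp
    also have "\<dots> \<le> (\<Sum>g\<in>Q'. 2 * (\<beta> / (4 * real (card Q) + 4)))"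
    proof (intro sum_mono)
      fix g assume g: "g \<in> Q'"
      have gr: "\<forall>x. 0 \<le> g x \<and> g x \<le> 1" using Q'r g by blast
      have "measure_pmf.prob (replicate_pmf m \<nu>) (?B g)
         \<le> 2 * exp (- real m * t\<^sup>2 / (2 * (S2 + Mx * t / 3)))"
      proof (rule bern_abs[OF _ _ Mx0 S20 t0 ES[OF gr]])
        show "\<forall>x. R x * g x \<le> Mx"
        proof
          fix x have "R x * g x \<le> R x" using R0 gr by (simp add: mult_left_le)
          then show "R x * g x \<le> Mx" using RM' by (meson order_trans)
        qed
        show "\<forall>x. - (R x * g x) \<le> Mx"
        proof
          fix x have "0 \<le> R x * g x" using R0 gr by simp
          then show "- (R x * g x) \<le> Mx" using Mx0 by linarith
        qed
      qed
      also have "\<dots> \<le> 2 * (\<beta> / (4 * real (card Q) + 4))" by (rule bern_tail)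
      finally show "measure_pmf.prob (replicate_pmf m \<nu>) (?B g) \<le> 2 * (\<beta> / (4 * real (card Q) + 4))" .
    qed
    also have "\<dots> = real (card Q') * (2 * (\<beta> / (4 * real (card Q) + 4)))" by simp
    also have "\<dots> \<le> (real (card Q) + 1) * (2 * (\<beta> / (4 * real (card Q) + 4)))"
      using cQ' \<beta>0 by (intro mult_right_mono) auto
    also have "\<dots> = \<beta> / 2" by (simp add: field_simps)
    finally have "measure_pmf.prob (replicate_pmf m \<nu>) (UNIV - G2) \<le> \<beta>/2" by simp
    moreover have "measure_pmf.prob (replicate_pmf m \<nu>) (UNIV - G2) = 1 - measure_pmf.prob (replicate_pmf m \<nu>) G2"
      using measure_pmf.prob_compl[of G2 "replicate_pmf m \<nu>"] by simp
    ultimately show ?thesis by linarith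
  qed
  have "1 - \<beta> \<le> (1 - \<beta>/2) * (1 - \<beta>/2)" by (simp add: field_simps power2_eq_square)
  also have "\<dots> \<le> measure_pmf.prob (replicate_pmf n \<mu>) G1 * measure_pmf.prob (replicate_pmf m \<nu>) G2"
    using P1 P2 \<beta>1 by (intro mult_mono) auto
  also have "\<dots> = measure_pmf.prob (pair_pmf (replicate_pmf n \<mu>) (replicate_pmf m \<nu>)) (G1 \<times> G2)"
    by (rule measure_pmf_prob_product[symmetric]) auto
  also have "\<dots> \<le> measure_pmf.prob (pair_pmf (replicate_pmf n \<mu>) (replicate_pmf m \<nu>))
           {(Dt, Dh). mix_err Dt Q (set Dh) \<le> \<alpha>}"
    by (rule measure_pmf.finite_measure_mono[OF sub]) simp
  finally show ?thesis .
qed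

end
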